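(* Let $f_1,\dots,f_m:\mathbb R^n\to\mathbb R$ be continuously differentiable with $\nabla f_j$ being $L_j$-Lipschitz, and set $L=\max_j L_j$. Let $C_1>0$, $\tau>0$ and $x,y\in\mathbb R^n$ with $\|x\|+\|y\|\le C_1$, and let $\lambda_\tau(x,y)\in\operatorname*{argmin}_{\lambda\in\Delta_m}\{\langle\lambda,F(x)-F(y)\rangle+\frac{\tau}{2}\|DF(y)\lambda\|^2\}$. Then $$\Big\|DF(y)\lambda_\tau(x,y)-\mathrm{proj}_{C(x)}\Big(\frac{y-x}{\tau}\Big)\Big\|\le\sqrt{C_2L}\,\|x-y\|^{1/2}+\sqrt{\frac{10L}{\tau}}\,\|x-y\|,$$ where $C_2:=LC_1+2\max_{1\le j\le m}\|\nabla f_j(0)\|$.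
   Context: $F=(f_1,\dots,f_m)^\top$. $\Delta_m$ is the unit simplex in $\mathbb R^m$. $DF(y)=[\nabla f_1(y),\dots,\nabla f_m(y)]\in\mathbb R^{n\times m}$. $C(x)=\mathrm{conv}\{\nabla f_1(x),\dots,\nabla f_m(x)\}$, and $\mathrm{proj}_C$ is the Euclidean projection onto the closed convex set $C$. *)

theory Defs
  imports "HOL-Analysis.Analysis"
begin

text \<open>Unit unit_simplex in R^m, vectors indexed by 1..m (values outside are irrelevant).\<close>
definition unit_simplex :: "nat \<Rightarrow> (nat \<Rightarrow> real) set" where
  "unit_simplex m = {lam. (\<forall>j\<in>{1..m}. lam j \<ge> 0) \<and> (\<Sum>j=1..m. lam j) = 1}"

text \<open>DF(y) lam = sum_j lam_j grad f_j(y), where g j is the gradient of f j.\<close>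
definition DFmul :: "nat \<Rightarrow> (nat \<Rightarrow> 'a \<Rightarrow> 'a::real_vector) \<Rightarrow> 'a \<Rightarrow> (nat \<Rightarrow> real) \<Rightarrow> 'a" where
  "DFmul m g y lam = (\<Sum>j=1..m. lam j *\<^sub>R g j y)"

definition Cset :: "nat \<Rightarrow> (nat \<Rightarrow> 'a \<Rightarrow> 'a::real_vector) \<Rightarrow> 'a \<Rightarrow> 'a set" where
  "Cset m g x = convex hull ((\<lambda>j. g j x) ` {1..m})"

definition obj :: "nat \<Rightarrow> (nat \<Rightarrow> 'a \<Rightarrow> real) \<Rightarrow> (nat \<Rightarrow> 'a \<Rightarrow> 'a::real_normed_vector)
    \<Rightarrow> real \<Rightarrow> 'a \<Rightarrow> 'a \<Rightarrow> (nat \<Rightarrow> real) \<Rightarrow> real" where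
  "obj m f g \<tau> x y lam = (\<Sum>j=1..m. lam j * (f j x - f j y)) + \<tau> / 2 * (norm (DFmul m g y lam))\<^sup>2"

end

theory Submission
  imports Defs
begin

lemma remainder:
  fixes f :: "real^'n \<Rightarrow> real" and g :: "real^'n \<Rightarrow> real^'n"
  assumes d: "\<And>z. (f has_derivative (\<lambda>h. g z \<bullet> h)) (at z)" and l: "lipschitz_on K UNIV g"
  shows "\<bar>f x - f y - g y \<bullet> (x - y)\<bar> \<le> K * (norm (x - y))\<^sup>2"
proof -
  have K0: "0 \<le> K" using l by (simp add: lipschitz_on_def)
  let ?S = "cball y (norm (x - y))"
  have "norm (f x - f y - g y \<bullet> (x - y)) \<le> norm (x - y) * (K * norm (x - y))"
  proof (rule differentiable_bound_linearization[where S="?S" and f'="\<lambda>z h. g z \<bullet> h"])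
    fix t :: real assume "t \<in> {0..1}"
    then show "y + t *\<^sub>R (x - y) \<in> ?S" by (auto simp: dist_norm mult_left_le_one_le)
  next
    fix z assume "z \<in> ?S"
    show "(f has_derivative (\<lambda>h. g z \<bullet> h)) (at z within ?S)"
      using d has_derivative_at_withinI by blast
  next
    fix z assume z: "z \<in> ?S"
    have e: "(\<lambda>h. g z \<bullet> h) - (\<lambda>h. g y \<bullet> h) = (\<lambda>h. (g z - g y) \<bullet> id h)"
      by (auto simp: inner_diff_left)
    have "onorm (\<lambda>h. (g z - g y) \<bullet> id h) \<le> norm (g z - g y) * onorm (id :: real^'n \<Rightarrow> real^'n)"
      by (rule onorm_inner_right) simp
    also have "onorm (id :: real^'n \<Rightarrow> real^'n) = 1" using onorm_id by (simp add: id_def)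
    also have "norm (g z - g y) \<le> K * dist z y"
      using lipschitz_onD[OF l] by (simp add: dist_norm[symmetric])
    also have "K * dist z y \<le> K * norm (x - y)"
      using z K0 by (intro mult_left_mono) (auto simp: dist_commute)
    finally show "onorm ((\<lambda>h. g z \<bullet> h) - (\<lambda>h. g y \<bullet> h)) \<le> K * norm (x - y)"
      unfolding e by simp
  qed simp
  then show ?thesis by (simp add: power2_eq_square mult_ac)
qed

lemma simplex_norm:
  fixes h :: "nat \<Rightarrow> 'a::real_normed_vector"
  assumes mu: "mu \<in> unit_simplex m" and b: "\<And>j. j \<in> {1..m} \<Longrightarrow> norm (h j) \<le> B"
  shows "norm (\<Sum>j=1..m. mu j *\<^sub>R h j) \<le> B"
proof -
  have "norm (\<Sum>j=1..m. mu j *\<^sub>R h j) \<le> (\<Sum>j=1..m. norm (mu j *\<^sub>R h j))" by (rule norm_sum)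
  also have "\<dots> \<le> (\<Sum>j=1..m. mu j * B)"
    using mu b by (intro sum_mono) (auto simp: unit_simplex_def intro: mult_left_mono)
  also have "\<dots> = B" using mu by (simp add: unit_simplex_def sum_distrib_right[symmetric])
  finally show ?thesis .
qed

lemma Cset_sub:
  "Cset m g x \<subseteq> {DFmul m g x mu | mu. mu \<in> unit_simplex m}"
  unfolding Cset_def
proof (rule hull_minimal)
  show "(\<lambda>j. g j x) ` {1..m} \<subseteq> {DFmul m g x mu |mu. mu \<in> unit_simplex m}"
  proof
    fix z assume "z \<in> (\<lambda>j. g j x) ` {1..m}"
    then obtain i where i: "i \<in> {1..m}" "z = g i x" by auto
    define mu where "mu = (\<lambda>j. if j = i then 1 else 0::real)"
    have "mu \<in> unit_simplex m" using i by (simp add: mu_def unit_simplex_def)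
    moreover have "DFmul m g x mu = z" using i
      proof -
      have "DFmul m g x mu = (\<Sum>j=1..m. if j = i then g j x else 0)"
        unfolding DFmul_def mu_def by (rule sum.cong) auto
      then show ?thesis using i by simp
    qed
    ultimately show "z \<in> {DFmul m g x mu |mu. mu \<in> unit_simplex m}" by blast
  qed
  show "convex {DFmul m g x mu |mu. mu \<in> unit_simplex m}"
    unfolding convex_def
  proof (intro ballI allI impI)
    fix a b and u v :: real
    assume a: "a \<in> {DFmul m g x mu |mu. mu \<in> unit_simplex m}"
      and b: "b \<in> {DFmul m g x mu |mu. mu \<in> unit_simplex m}"
      and uv: "0 \<le> u" "0 \<le> v" "u + v = 1"
    obtain ma where ma: "ma \<in> unit_simplex m" "a = DFmul m g x ma" using a by auto
    obtain mb where mb: "mb \<in> unit_simplex m" "b = DFmul m g x mb" using b by auto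
    define mc where "mc = (\<lambda>j. u * ma j + v * mb j)"
    have "mc \<in> unit_simplex m" using ma mb uv
      by (auto simp: unit_simplex_def mc_def sum.distrib sum_distrib_left[symmetric])
    moreover have "DFmul m g x mc = u *\<^sub>R a + v *\<^sub>R b"
      by (simp add: ma mb DFmul_def mc_def scaleR_add_left sum.distrib scaleR_sum_right)
    ultimately show "u *\<^sub>R a + v *\<^sub>R b \<in> {DFmul m g x mu |mu. mu \<in> unit_simplex m}" by (metis (mono_tags, lifting) CollectI)
  qed
qed

lemma DF_in_Cset:
  assumes "mu \<in> unit_simplex m" shows "DFmul m g x mu \<in> Cset m g x"
  unfolding DFmul_def Cset_def
  by (rule convex_sum) (use assms in \<open>auto simp: unit_simplex_def intro: hull_inc\<close>)

lemma quad_nonneg_imp: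
  fixes c b :: real
  assumes "b \<ge> 0" and h: "\<And>t. 0 < t \<Longrightarrow> t \<le> 1 \<Longrightarrow> 0 \<le> t * c + t\<^sup>2 * b"
  shows "0 \<le> c"
proof (rule ccontr)
  assume "\<not> 0 \<le> c"
  define t where "t = min 1 (- c / (2 * (b + 1)))"
  have "0 < - c / (2 * (b + 1))" using \<open>\<not> 0 \<le> c\<close> \<open>b \<ge> 0\<close> by (intro divide_pos_pos) auto
  then have t0: "0 < t" "t \<le> 1" by (auto simp: t_def)
  have "t * (b + 1) \<le> - c / 2"
  proof -
    have "t \<le> - c / (2 * (b + 1))" by (simp add: t_def)
    then have "t * (b + 1) \<le> - c / (2 * (b + 1)) * (b + 1)"
      using \<open>b \<ge> 0\<close> by (intro mult_right_mono) auto
    also have "\<dots> = - c / 2" using \<open>b \<ge> 0\<close> by (simp add: field_simps)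
    finally show ?thesis .
  qed
  then have "t * b \<le> - c / 2" using t0 by (simp add: algebra_simps)
  then have "c + t * b < 0" using \<open>\<not> 0 \<le> c\<close> by linarith
  then have "t * (c + t * b) < 0" using t0 by (simp add: mult_pos_neg)
  moreover have "t * (c + t * b) = t * c + t\<^sup>2 * b" by (simp add: power2_eq_square algebra_simps)
  ultimately show False using h[OF t0] by linarith
qed

lemma first_order:
  fixes g :: "nat \<Rightarrow> 'a \<Rightarrow> 'a::real_inner"
  assumes lam: "lam \<in> unit_simplex m" and mu: "mu \<in> unit_simplex m" and tau: "\<tau> > 0"
    and argmin: "\<forall>nu \<in> unit_simplex m. obj m f g \<tau> x y lam \<le> obj m f g \<tau> x y nu"
  shows "0 \<le> (\<Sum>j=1..m. (mu j - lam j) * (f j x - f j y))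
            + \<tau> * ((DFmul m g y mu - DFmul m g y lam) \<bullet> DFmul m g y lam)"
proof -
  define p where "p = DFmul m g y lam"
  define d where "d = DFmul m g y mu - p"
  define A where "A = (\<Sum>j=1..m. lam j * (f j x - f j y))"
  define c1 where "c1 = (\<Sum>j=1..m. (mu j - lam j) * (f j x - f j y))"
  show ?thesis unfolding c1_def[symmetric] p_def[symmetric] d_def[symmetric]
  proof (rule quad_nonneg_imp[where b = "\<tau> / 2 * (d \<bullet> d)"])
    show "0 \<le> \<tau> / 2 * (d \<bullet> d)" using tau by simp
    fix t :: real assume t: "0 < t" "t \<le> 1"
    define nu where "nu = (\<lambda>j. lam j + t * (mu j - lam j))"
    have nuS: "nu \<in> unit_simplex m"
    proof -
      have "0 \<le> nu j" if "j \<in> {1..m}" for j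
      proof -
        have "0 \<le> lam j" "0 \<le> mu j" using lam mu that by (auto simp: unit_simplex_def)
        then have "0 \<le> (1 - t) * lam j + t * mu j" using t by simp
        then show ?thesis by (simp add: nu_def algebra_simps)
      qed
      moreover have "(\<Sum>j=1..m. nu j) = 1" using lam mu
        by (simp add: nu_def unit_simplex_def sum.distrib sum_distrib_left[symmetric] sum_subtractf)
      ultimately show ?thesis by (simp add: unit_simplex_def)
    qed
    have DFnu: "DFmul m g y nu = p + t *\<^sub>R d"
      by (simp add: nu_def DFmul_def p_def d_def scaleR_add_left sum.distrib scaleR_diff_left
          sum_subtractf scaleR_sum_right algebra_simps)
    have Snu: "(\<Sum>j=1..m. nu j * (f j x - f j y)) = A + t * c1"
      unfolding nu_def A_def c1_def sum_distrib_left sum.distrib[symmetric]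
      by (rule sum.cong) (auto simp: algebra_simps)
    have "obj m f g \<tau> x y nu = A + t * c1 + \<tau> / 2 * ((p + t *\<^sub>R d) \<bullet> (p + t *\<^sub>R d))"
      unfolding obj_def DFnu Snu by (simp add: power2_norm_eq_inner)
    also have "(p + t *\<^sub>R d) \<bullet> (p + t *\<^sub>R d) = p \<bullet> p + 2 * t * (d \<bullet> p) + t\<^sup>2 * (d \<bullet> d)"
      by (simp add: inner_add_left inner_add_right inner_commute power2_eq_square algebra_simps)
    finally have "obj m f g \<tau> x y nu = obj m f g \<tau> x y lam + (t * (c1 + \<tau> * (d \<bullet> p)) + t\<^sup>2 * (\<tau> / 2 * (d \<bullet> d)))"
      unfolding obj_def p_def[symmetric] A_def[symmetric] by (simp add: power2_norm_eq_inner algebra_simps)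
    then show "0 \<le> t * (c1 + \<tau> * (d \<bullet> p)) + t\<^sup>2 * (\<tau> / 2 * (d \<bullet> d))"
      using argmin nuS by force
  qed
qed

lemma DF_diff:
  "DFmul m g y mu - DFmul m g x mu = (\<Sum>j=1..m. mu j *\<^sub>R (g j y - g j x))"
  by (simp add: DFmul_def scaleR_diff_right sum_subtractf)

theorem mainTheorem5:
  fixes f :: "nat \<Rightarrow> real ^ 'n \<Rightarrow> real"
    and g :: "nat \<Rightarrow> real ^ 'n \<Rightarrow> real ^ 'n"
    and Lj :: "nat \<Rightarrow> real"
    and m :: nat and C1 \<tau> :: real and x y :: "real ^ 'n"
    and lam :: "nat \<Rightarrow> real"
  assumes grad: "\<And>j z. j \<in> {1..m} \<Longrightarrow> (f j has_derivative (\<lambda>h. g j z \<bullet> h)) (at z)"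
    and cont: "\<And>j. j \<in> {1..m} \<Longrightarrow> continuous_on UNIV (g j)"
    and lip: "\<And>j. j \<in> {1..m} \<Longrightarrow> lipschitz_on (Lj j) UNIV (g j)"
    and C1: "C1 > 0" and tau: "\<tau> > 0"
    and xy: "norm x + norm y \<le> C1"
    and lam: "lam \<in> unit_simplex m"
    and argmin: "\<forall>mu \<in> unit_simplex m. obj m f g \<tau> x y lam \<le> obj m f g \<tau> x y mu"
  shows "let L = Max (Lj ` {1..m});
             C2 = L * C1 + 2 * Max ((\<lambda>j. norm (g j 0)) ` {1..m})
         in norm (DFmul m g y lam - closest_point (Cset m g x) ((1 / \<tau>) *\<^sub>R (y - x)))
            \<le> sqrt (C2 * L) * sqrt (norm (x - y)) + sqrt (10 * L / \<tau>) * norm (x - y)"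
proof -
  define L where "L = Max (Lj ` {1..m})"
  define G0 where "G0 = Max ((\<lambda>j. norm (g j 0)) ` {1..m})"
  define C2 where "C2 = L * C1 + 2 * G0"
  define \<delta> where "\<delta> = norm (x - y)"
  define v where "v = (1 / \<tau>) *\<^sub>R (y - x)"
  define p where "p = DFmul m g y lam"
  define q where "q = closest_point (Cset m g x) v"
  define a where "a = (\<lambda>j. f j x - f j y)"
  have m1: "1 \<le> m"
  proof (rule ccontr)
    assume "\<not> 1 \<le> m" then have "m = 0" by simp
    then show False using lam by (simp add: unit_simplex_def)
  qed
  have LjL: "Lj j \<le> L" if "j \<in> {1..m}" for j
    unfolding L_def using that by (intro Max_ge) auto
  have G0j: "norm (g j 0) \<le> G0" if "j \<in> {1..m}" for j
    unfolding G0_def using that by (intro Max_ge) auto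
  have Lj0: "0 \<le> Lj j" if "j \<in> {1..m}" for j using lip[OF that] by (simp add: lipschitz_on_def)
  have L0: "0 \<le> L" using LjL[of 1] Lj0[of 1] m1 by simp
  have G00: "0 \<le> G0"
  proof -
    have "(1::nat) \<in> {1..m}" using m1 by simp
    then have "norm (g 1 0) \<le> G0" by (rule G0j)
    then show ?thesis by (rule order_trans[OF norm_ge_zero])
  qed
  have d0: "0 \<le> \<delta>" by (simp add: \<delta>_def)
  have gdiff: "norm (g j y - g j x) \<le> L * \<delta>" if "j \<in> {1..m}" for j
  proof -
    have "norm (g j y - g j x) \<le> Lj j * dist y x"
      using lipschitz_onD[OF lip[OF that]] by (simp add: dist_norm[symmetric])
    also have "\<dots> \<le> L * \<delta>" using LjL[OF that] d0 L0
      by (intro mult_mono) (auto simp: \<delta>_def dist_norm norm_minus_commute)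
    finally show ?thesis .
  qed
  have gbound: "norm (g j z) \<le> G0 + L * norm z" if "j \<in> {1..m}" for j z
  proof -
    have "norm (g j z - g j 0) \<le> Lj j * dist z 0"
      using lipschitz_onD[OF lip[OF that], of z 0] by (simp add: dist_norm)
    also have "\<dots> \<le> L * norm z" using LjL[OF that] by (simp add: mult_right_mono)
    finally have "norm (g j z - g j 0) \<le> L * norm z" .
    moreover have "norm (g j z) \<le> norm (g j z - g j 0) + norm (g j 0)"
      by (metis diff_add_cancel norm_triangle_ineq)
    ultimately show ?thesis using G0j[OF that] by linarith
  qed
  have DFdiff: "norm (DFmul m g y mu - DFmul m g x mu) \<le> L * \<delta>" if "mu \<in> unit_simplex m" for mu
    unfolding DF_diff by (rule simplex_norm[OF that gdiff])
  have DFbound: "norm (DFmul m g z mu) \<le> G0 + L * norm z" if "mu \<in> unit_simplex m" for mu z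
    unfolding DFmul_def by (rule simplex_norm[OF that gbound])
  have R: "\<bar>(\<Sum>j=1..m. mu j * a j) - DFmul m g y mu \<bullet> (x - y)\<bar> \<le> L * \<delta>\<^sup>2"
    if mu: "mu \<in> unit_simplex m" for mu
  proof -
    have "(\<Sum>j=1..m. mu j * a j) - DFmul m g y mu \<bullet> (x - y)
        = (\<Sum>j=1..m. mu j * (a j - g j y \<bullet> (x - y)))"
      by (simp add: DFmul_def inner_sum_left sum_subtractf right_diff_distrib)
    also have "\<bar>\<dots>\<bar> \<le> (\<Sum>j=1..m. \<bar>mu j * (a j - g j y \<bullet> (x - y))\<bar>)" by (rule sum_abs)
    also have "\<dots> \<le> (\<Sum>j=1..m. mu j * (L * \<delta>\<^sup>2))"
    proof (rule sum_mono)
      fix j assume j: "j \<in> {1..m}"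
      have mj: "0 \<le> mu j" using mu j by (simp add: unit_simplex_def)
      have "\<bar>a j - g j y \<bullet> (x - y)\<bar> \<le> Lj j * \<delta>\<^sup>2"
        unfolding a_def \<delta>_def by (rule remainder[OF grad[OF j] lip[OF j]])
      also have "\<dots> \<le> L * \<delta>\<^sup>2" using LjL[OF j] by (intro mult_right_mono) auto
      finally show "\<bar>mu j * (a j - g j y \<bullet> (x - y))\<bar> \<le> mu j * (L * \<delta>\<^sup>2)"
        using mj by (simp add: abs_mult mult_left_mono)
    qed
    also have "\<dots> = L * \<delta>\<^sup>2" using mu by (simp add: unit_simplex_def sum_distrib_right[symmetric])
    finally show ?thesis .
  qed
  have Cne: "Cset m g x \<noteq> {}" using DF_in_Cset[OF lam] by blast
  have Cconv: "convex (Cset m g x)" by (simp add: Cset_def)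
  have Cclosed: "closed (Cset m g x)"
    unfolding Cset_def by (intro compact_imp_closed finite_imp_compact_convex_hull) auto
  have qC: "q \<in> Cset m g x" unfolding q_def by (rule closest_point_in_set[OF Cclosed Cne])
  then obtain lq where lq: "lq \<in> unit_simplex m" "q = DFmul m g x lq" using Cset_sub by blast
  define q' where "q' = DFmul m g y lq"
  define p' where "p' = DFmul m g x lam"
  have B: "(v - q) \<bullet> (p' - q) \<le> 0"
    unfolding q_def p'_def by (rule closest_point_dot[OF Cconv Cclosed DF_in_Cset[OF lam]])
  have A0: "0 \<le> (\<Sum>j=1..m. (lq j - lam j) * a j) + \<tau> * ((q' - p) \<bullet> p)"
    using first_order[OF lam lq(1) tau argmin] unfolding a_def q'_def p_def .
  have split: "(\<Sum>j=1..m. (lq j - lam j) * a j) = (\<Sum>j=1..m. lq j * a j) - (\<Sum>j=1..m. lam j * a j)"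
    by (simp add: left_diff_distrib sum_subtractf)
  have xyv: "x - y = - \<tau> *\<^sub>R v" using tau by (simp add: v_def)
  have A1: "0 \<le> \<tau> * ((q' - p) \<bullet> (p - v)) + 2 * L * \<delta>\<^sup>2"
  proof -
    have "(\<Sum>j=1..m. lq j * a j) \<le> q' \<bullet> (x - y) + L * \<delta>\<^sup>2" using R[OF lq(1)] unfolding q'_def by linarith
    moreover have "p \<bullet> (x - y) - L * \<delta>\<^sup>2 \<le> (\<Sum>j=1..m. lam j * a j)" using R[OF lam] unfolding p_def by linarith
    moreover have "q' \<bullet> (x - y) - p \<bullet> (x - y) + \<tau> * ((q' - p) \<bullet> p) = \<tau> * ((q' - p) \<bullet> (p - v))"
      unfolding xyv by (simp add: inner_diff_left inner_diff_right algebra_simps)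
    ultimately show ?thesis using A0 split by linarith
  qed
  have A: "(p - q') \<bullet> (p - v) \<le> 2 * L * \<delta>\<^sup>2 / \<tau>"
  proof -
    have "\<tau> * ((p - q') \<bullet> (p - v)) \<le> 2 * L * \<delta>\<^sup>2"
      using A1 by (simp add: inner_diff_left algebra_simps)
    then show ?thesis using tau by (simp add: field_simps mult.commute)
  qed
  have nv: "norm v = \<delta> / \<tau>" using tau by (simp add: v_def \<delta>_def norm_minus_commute)
  have np: "norm p \<le> G0 + L * norm y" unfolding p_def by (rule DFbound[OF lam])
  have nq: "norm q \<le> G0 + L * norm x" unfolding lq(2) by (rule DFbound[OF lq(1)])
  have nqq: "norm (q' - q) \<le> L * \<delta>" unfolding q'_def lq(2) by (rule DFdiff[OF lq(1)])
  have npp: "norm (p - p') \<le> L * \<delta>" unfolding p_def p'_def by (rule DFdiff[OF lam])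
  have T2: "(q' - q) \<bullet> (p - v) \<le> L * \<delta> * (G0 + L * norm y + \<delta> / \<tau>)"
  proof -
    have "(q' - q) \<bullet> (p - v) \<le> norm (q' - q) * norm (p - v)" by (rule Cauchy_Schwarz_ineq2[THEN abs_le_D1])
    also have "\<dots> \<le> L * \<delta> * (G0 + L * norm y + \<delta> / \<tau>)"
      using nqq np nv norm_triangle_ineq4[of p v] L0 d0 by (intro mult_mono) auto
    finally show ?thesis .
  qed
  have T3: "(p - p') \<bullet> (v - q) \<le> L * \<delta> * (\<delta> / \<tau> + G0 + L * norm x)"
  proof -
    have "(p - p') \<bullet> (v - q) \<le> norm (p - p') * norm (v - q)" by (rule Cauchy_Schwarz_ineq2[THEN abs_le_D1])
    also have "\<dots> \<le> L * \<delta> * (\<delta> / \<tau> + G0 + L * norm x)"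
      using npp nq nv norm_triangle_ineq4[of v q] L0 d0 by (intro mult_mono) auto
    finally show ?thesis .
  qed
  have T4: "(p' - q) \<bullet> (v - q) \<le> 0" using B by (simp add: inner_commute)
  have decomp: "(p - q) \<bullet> (p - q) = (p - q') \<bullet> (p - v) + (q' - q) \<bullet> (p - v) + (p - p') \<bullet> (v - q) + (p' - q) \<bullet> (v - q)"
    by (simp add: inner_diff_left inner_diff_right inner_commute algebra_simps)
  have "(p - q) \<bullet> (p - q) \<le> 2 * L * \<delta>\<^sup>2 / \<tau> + L * \<delta> * (G0 + L * norm y + \<delta> / \<tau>) + L * \<delta> * (\<delta> / \<tau> + G0 + L * norm x)"
    using decomp A T2 T3 T4 by linarith
  also have "\<dots> = 4 * L * \<delta>\<^sup>2 / \<tau> + L * \<delta> * (2 * G0 + L * (norm x + norm y))"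
    by (simp add: power2_eq_square field_simps)
  also have "\<dots> \<le> 4 * L * \<delta>\<^sup>2 / \<tau> + L * \<delta> * (2 * G0 + L * C1)"
    using L0 d0 xy by (intro add_left_mono mult_left_mono) (auto intro: mult_left_mono)
  finally have D2: "(norm (p - q))\<^sup>2 \<le> C2 * L * \<delta> + 4 * L * \<delta>\<^sup>2 / \<tau>"
    by (simp add: power2_norm_eq_inner C2_def algebra_simps)
  have C20: "0 \<le> C2" using L0 C1 G00 by (simp add: C2_def)
  have "norm (p - q) \<le> sqrt (C2 * L * \<delta> + 4 * L * \<delta>\<^sup>2 / \<tau>)"
    using D2 by (rule real_le_rsqrt)
  also have "\<dots> \<le> sqrt (C2 * L * \<delta>) + sqrt (4 * L * \<delta>\<^sup>2 / \<tau>)"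
    using C20 L0 d0 tau by (intro sqrt_add_le_add_sqrt) auto
  also have "sqrt (C2 * L * \<delta>) = sqrt (C2 * L) * sqrt \<delta>" by (simp add: real_sqrt_mult)
  also have "sqrt (4 * L * \<delta>\<^sup>2 / \<tau>) = sqrt (4 * L / \<tau>) * \<delta>"
    using d0 by (simp add: real_sqrt_mult real_sqrt_divide)
  also have "sqrt (4 * L / \<tau>) * \<delta> \<le> sqrt (10 * L / \<tau>) * \<delta>"
    using L0 tau d0 by (intro mult_right_mono) (auto intro: divide_right_mono)
  finally show ?thesis
    unfolding Let_def L_def[symmetric] G0_def[symmetric] C2_def[symmetric]
    by (simp add: p_def q_def v_def \<delta>_def)
qed

end
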